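(* In the abstract setting described in the context, let $u\in V\cap H^{k+1}(\Omega)$ be the solution of the forward problem, let $z:=0\in W$ (the exact solution of the adjoint problem with $g=0$), and let $(u_h,z_h)\in V_h\times W_h$ be a solution of the discrete problem. Assume (GO), (C1) and (A1) hold. Then \[ |\pi_V u-u_h|_{S_p}+|\pi_W z-z_h|_{S_a}\lesssim c_{a,\gamma}(1+c_a^2)^{1/2}\,h^k|u|_{H^{k+1}(\Omega)}+\epsilon(h)\|z_h\|. \] If moreover $s_p(u,w+w_h)=0$ for all $w\in W$ and $w_h\in W_h$, then \[ |u_h|_{S_p}+|z_h|_{S_a}\lesssim \big(c_{a,\gamma}+c_{a,\gamma}(1+c_a^2)^{1/2}\big)h^k|u|_{H^{k+1}(\Omega)}+\epsilon(h)\|z_h\|. \]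
   Context: Let $\Omega\subset\mathbb{R}^d$ ($d=2,3$) be a polygonal/polyhedral domain and $\{\mathcal T_h\}_h$ a family of quasi-uniform, shape-regular triangulations of $\Omega$ with mesh size $h=\max_{K}\mathrm{diam}(K)$; $X_h^k$ denotes the continuous piecewise polynomials of degree $\le k$ ($k\ge1$) on $\mathcal T_h$. $(\cdot,\cdot)$, $\|\cdot\|$ are the $L^2(\Omega)$ inner product and norm. Let $V,W\subset H^1(\Omega)$ be subspaces and $a:V\times W\to\mathbb R$ a bilinear form. Forward problem: given $f\in L^2(\Omega)$ find $u\in V$ with $a(u,w)=(f,w)$ for all $w\in W$ (strong form $\mathcal L u=f$); adjoint problem: given $g$ find $z\in W$ with $a(v,z)=(g,v)$ for all $v\in V$ (strong form $\mathcal L^*z=g$). Let $V_h,W_h\subset X_h^k$ be finite element spaces, $a_h$ a bilinear form on $(V+V_h)\times(W+W_h)$, and $s_p$, $s_a$ symmetric positive semi-definite bilinear forms on $V+V_h$ and $W+W_h$ respectively, with semi-norms $|x|_{S_p}=s_p(x,x)^{1/2}$, $|x|_{S_a}=s_a(x,x)^{1/2}$. The discrete problem: find $(u_h,z_h)\in V_h\times W_h$ such that $a_h(u_h,w_h)+s_a(z_h,w_h)=(f,w_h)$ and $a_h(v_h,z_h)-s_p(u_h,v_h)=-s_p(u,v_h)$ for all $(v_h,w_h)\in V_h\times W_h$, where $u$ is the exact forward solution. Assumptions: (GO) $a_h(u-u_h,w_h)=s_a(z_h,w_h)$ for all $w_h\in W_h$ and $a_h(v_h,z-z_h)=s_p(u-u_h,v_h)$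 for all $v_h\in V_h$. There are operators $\pi_V:V\to V_h$, $\pi_W:W\to W_h$, semi-norms $\|\cdot\|_+,\|\cdot\|_*,\|\cdot\|_{\mathcal L}$, constants $c_a,c_{a,\gamma}>0$ independent of $h$, and a function $\epsilon(h)\ge0$ such that: (C1) $a_h(v-\pi_Vv,x_h)\le\|v-\pi_Vv\|_+(c_a|x_h|_{S_a}+\epsilon(h)\|x_h\|)$ for all $v\in V\cap H^2(\Omega)$, $x_h\in W_h$; (A1) $\|v-\pi_Vv\|_{\mathcal L}+\|v-\pi_Vv\|_++|v-\pi_Vv|_{S_p}\le c_{a,\gamma}h^k|v|_{H^{k+1}(\Omega)}$ for all $v\in V\cap H^{k+1}(\Omega)$. The notation $A\lesssim B$ means $A\le CB$ with $C$ depending only on the mesh geometry and physical parameters, not on $h$. *)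

theory Defs
  imports "HOL-Analysis.Analysis"
begin

definition msum :: "'a::ab_group_add set \<Rightarrow> 'a set \<Rightarrow> 'a set" where
  "msum A B = {a + b | a b. a \<in> A \<and> b \<in> B}"

definition bilinear_on :: "'a::real_vector set \<Rightarrow> 'b::real_vector set \<Rightarrow> ('a \<Rightarrow> 'b \<Rightarrow> real) \<Rightarrow> bool" where
  "bilinear_on A B b \<longleftrightarrow>
     (\<forall>x\<in>A. \<forall>y\<in>A. \<forall>w\<in>B. \<forall>c::real.
        b (x + y) w = b x w + b y w \<and> b (c *\<^sub>R x) w = c * b x w) \<and>
     (\<forall>x\<in>A. \<forall>w\<in>B. \<forall>w'\<in>B. \<forall>c::real.
        b x (w + w') = b x w + b x w' \<and> b x (c *\<^sub>R w) = c * b x w)"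

definition sym_psd_on :: "'a::real_vector set \<Rightarrow> ('a \<Rightarrow> 'a \<Rightarrow> real) \<Rightarrow> bool" where
  "sym_psd_on A s \<longleftrightarrow> bilinear_on A A s \<and> (\<forall>x\<in>A. \<forall>y\<in>A. s x y = s y x) \<and> (\<forall>x\<in>A. 0 \<le> s x x)"

definition snorm :: "('a \<Rightarrow> 'a \<Rightarrow> real) \<Rightarrow> 'a \<Rightarrow> real" where
  "snorm s x = sqrt (s x x)"

definition seminorm_on :: "'a::real_vector set \<Rightarrow> ('a \<Rightarrow> real) \<Rightarrow> bool" where
  "seminorm_on A p \<longleftrightarrow> (\<forall>x\<in>A. 0 \<le> p x) \<and> (\<forall>x\<in>A. \<forall>c::real. p (c *\<^sub>R x) = \<bar>c\<bar> * p x)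
      \<and> (\<forall>x\<in>A. \<forall>y\<in>A. p (x + y) \<le> p x + p y)"

definition linear_on :: "'a::real_vector set \<Rightarrow> ('a \<Rightarrow> 'b::real_vector) \<Rightarrow> bool" where
  "linear_on A p \<longleftrightarrow> (\<forall>x\<in>A. \<forall>y\<in>A. \<forall>c d::real. p (c *\<^sub>R x + d *\<^sub>R y) = c *\<^sub>R p x + d *\<^sub>R p y)"

end

theory Submission
  imports Defs
begin


lemma subspace_msum:
  assumes sA: "subspace A" and sB: "subspace B" shows "subspace (msum A B)"
  unfolding subspace_def
proof (intro conjI ballI allI)
  have "(0::'a) + 0 \<in> msum A B" unfolding msum_def using subspace_0[OF sA] subspace_0[OF sB] by blast
  thus "0 \<in> msum A B" by simp
next
  fix x y assume x: "x \<in> msum A B" and y: "y \<in> msum A B"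
  obtain a b where ab: "x = a + b" "a \<in> A" "b \<in> B" using x unfolding msum_def by blast
  obtain c d where cd: "y = c + d" "c \<in> A" "d \<in> B" using y unfolding msum_def by blast
  have "(a + c) + (b + d) \<in> msum A B" unfolding msum_def
    using subspace_add[OF sA ab(2) cd(2)] subspace_add[OF sB ab(3) cd(3)] by blast
  moreover have "x + y = (a + c) + (b + d)" using ab cd by (simp add: algebra_simps)
  ultimately show "x + y \<in> msum A B" by simp
next
  fix r :: real and x assume x: "x \<in> msum A B"
  obtain a b where ab: "x = a + b" "a \<in> A" "b \<in> B" using x unfolding msum_def by blast
  have "r *\<^sub>R a + r *\<^sub>R b \<in> msum A B" unfolding msum_def
    using subspace_scale[OF sA ab(2)] subspace_scale[OF sB ab(3)] by blast
  moreover have "r *\<^sub>R x = r *\<^sub>R a + r *\<^sub>R b" using ab by (simp add: scaleR_right_distrib)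
  ultimately show "r *\<^sub>R x \<in> msum A B" by simp
qed

lemma msum_left: assumes "subspace B" "x \<in> A" shows "x \<in> msum A B"
proof -
  have "x + 0 \<in> msum A B" unfolding msum_def using assms subspace_0[OF assms(1)] by blast
  thus ?thesis by simp
qed
lemma msum_right: assumes "subspace A" "x \<in> B" shows "x \<in> msum A B"
proof -
  have "0 + x \<in> msum A B" unfolding msum_def using assms subspace_0[OF assms(1)] by blast
  thus ?thesis by simp
qed

lemma bil_add1: "bilinear_on A B b \<Longrightarrow> x\<in>A \<Longrightarrow> y\<in>A \<Longrightarrow> w\<in>B \<Longrightarrow> b (x+y) w = b x w + b y w"
  unfolding bilinear_on_def by blast
lemma bil_neg1: assumes "bilinear_on A B b" "x\<in>A" "w\<in>B" shows "b (-x) w = - b x w"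
proof -
  have "b ((-1) *\<^sub>R x) w = (-1) * b x w" using assms unfolding bilinear_on_def by blast
  thus ?thesis by simp
qed
lemma bil_add2: "bilinear_on A B b \<Longrightarrow> x\<in>A \<Longrightarrow> y\<in>B \<Longrightarrow> w\<in>B \<Longrightarrow> b x (y+w) = b x y + b x w"
  unfolding bilinear_on_def by blast
lemma bil_neg2: assumes "bilinear_on A B b" "x\<in>A" "w\<in>B" shows "b x (-w) = - b x w"
proof -
  have "b x ((-1) *\<^sub>R w) = (-1) * b x w" using assms unfolding bilinear_on_def by blast
  thus ?thesis by simp
qed

lemma real1:
  fixes x y A B M ca en :: real
  assumes "0 \<le> x" "0 \<le> y" "0 \<le> A" "0 \<le> B" "0 \<le> ca" "0 \<le> en" "A + B \<le> M"
    "x^2 + y^2 \<le> A*ca*y + A*en + (B^2 + x^2)/2"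
  shows "x + y \<le> 2 * (M * sqrt (1 + ca^2) + en)"
proof -
  define s where "s = sqrt (1 + ca^2)"
  have s2: "s^2 = 1 + ca^2" unfolding s_def by simp
  have s0: "1 \<le> s" unfolding s_def by simp
  have M0: "0 \<le> M" using assms by argo
  have "0 \<le> (ca*A - y)^2" by simp
  hence a1: "A*ca*y \<le> (ca^2*A^2 + y^2)/2" by (simp add: power2_eq_square algebra_simps)
  have "0 \<le> (M - en)^2" by simp
  hence a2': "M*en \<le> (M^2+en^2)/2" by (simp add: power2_eq_square algebra_simps)
  have "A*en \<le> M*en" using assms by (simp add: mult_right_mono)
  hence a2: "A*en \<le> (M^2 + en^2)/2" using a2' by argo
  have AM: "A^2 \<le> M^2" "B^2 \<le> M^2" using assms by (auto intro!: power_mono)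
  have "ca^2*A^2 \<le> ca^2*M^2" using AM by (simp add: mult_left_mono)
  moreover have "(2+ca^2)*M^2 = 2*M^2 + ca^2*M^2" by (simp add: algebra_simps)
  ultimately have q: "x^2 + y^2 \<le> (2 + ca^2) * M^2 + en^2" using assms(8) a1 a2 AM by argo
  have "0 \<le> (x - y)^2" by simp
  hence "(x+y)^2 \<le> 2*(x^2+y^2)" by (simp add: power2_eq_square algebra_simps)
  also have "\<dots> \<le> 2*((2 + ca^2) * M^2 + en^2)" using q by simp
  also have "\<dots> \<le> 4 * (s^2 * M^2) + 4 * en^2 + 8 * (M * s * en)"
  proof -
    have "0 \<le> M * s * en" using M0 s0 assms by simp
    moreover have "1 * M^2 \<le> s^2 * M^2" using s2 by (intro mult_right_mono) auto
    ultimately show ?thesis using s2 by (simp add: algebra_simps)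
  qed
  also have "\<dots> = (2 * (M * s + en))^2" by (simp add: power2_eq_square algebra_simps)
  finally have "(x+y)^2 \<le> (2 * (M * s + en))^2" .
  hence "x + y \<le> 2 * (M * s + en)" by (rule power2_le_imp_le) (use M0 s0 assms in simp)
  thus ?thesis unfolding s_def .
qed

lemma core:
  fixes u uh zh :: "'f::real_inner" and piV piW :: "'f \<Rightarrow> 'f"
  assumes sV: "subspace V" and sW: "subspace W" and sVh: "subspace Vh" and sWh: "subspace Wh"
  and H: "Hk1 \<subseteq> H2" and semi: "seminorm_on Hk1 semHk1" and h0: "0 < h"
  and uV: "u \<in> V" and uH: "u \<in> Hk1"
  and bah: "bilinear_on (msum V Vh) (msum W Wh) ah"
  and psp: "sym_psd_on (msum V Vh) sp" and psa: "sym_psd_on (msum W Wh) sa"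
  and uhV: "uh \<in> Vh" and zhW: "zh \<in> Wh"
  and GO1: "\<forall>wh\<in>Wh. ah (u - uh) wh = sa zh wh"
  and GO2: "\<forall>vh\<in>Vh. ah vh (0 - zh) = sp (u - uh) vh"
  and piVi: "piV ` V \<subseteq> Vh" and linW: "linear_on W piW"
  and np: "seminorm_on (msum V Vh) nplus" and nl: "seminorm_on (msum V Vh) nL"
  and ca: "0 < ca" and cag: "0 < cag" and eps: "0 \<le> eps"
  and C1: "\<forall>v\<in>V \<inter> H2. \<forall>xh\<in>Wh.
        ah (v - piV v) xh \<le> nplus (v - piV v) * (ca * snorm sa xh + eps * norm xh)"
  and A1: "\<forall>v\<in>V \<inter> Hk1.
        nL (v - piV v) + nplus (v - piV v) + snorm sp (v - piV v) \<le> cag * h ^ k * semHk1 v"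
  shows "snorm sp (piV u - uh) + snorm sa (piW 0 - zh)
        \<le> 4 * (cag * sqrt (1 + ca\<^sup>2) * h ^ k * semHk1 u + eps * norm zh)
   \<and> ((\<forall>v\<in>V. \<forall>vh\<in>Vh. sp u (v + vh) = 0) \<longrightarrow>
        snorm sp uh + snorm sa zh
          \<le> 4 * ((cag + cag * sqrt (1 + ca\<^sup>2)) * h ^ k * semHk1 u + eps * norm zh))"
proof -
  define MV where "MV = msum V Vh"
  define MW where "MW = msum W Wh"
  have sMV: "subspace MV" unfolding MV_def by (rule subspace_msum[OF sV sVh])
  have sMW: "subspace MW" unfolding MW_def by (rule subspace_msum[OF sW sWh])
  have bsp: "bilinear_on MV MV sp" using psp unfolding sym_psd_on_def MV_def by blast
  have symsp: "\<And>x y. x \<in> MV \<Longrightarrow> y \<in> MV \<Longrightarrow> sp x y = sp y x" using psp unfolding sym_psd_on_def MV_def by blast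
  have possp: "\<And>x. x \<in> MV \<Longrightarrow> 0 \<le> sp x x" using psp unfolding sym_psd_on_def MV_def by blast
  have bsa: "bilinear_on MW MW sa" using psa unfolding sym_psd_on_def MW_def by blast
  have possa: "\<And>x. x \<in> MW \<Longrightarrow> 0 \<le> sa x x" using psa unfolding sym_psd_on_def MW_def by blast
  have bah': "bilinear_on MV MW ah" using bah unfolding MV_def MW_def .
  have piVu: "piV u \<in> Vh" using piVi uV by blast
  have uM: "u \<in> MV" unfolding MV_def by (rule msum_left[OF sVh uV])
  have uhM: "uh \<in> MV" unfolding MV_def by (rule msum_right[OF sV uhV])
  have piVuM: "piV u \<in> MV" unfolding MV_def by (rule msum_right[OF sV piVu])
  have zhM: "zh \<in> MW" unfolding MW_def by (rule msum_right[OF sW zhW])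
  define eta where "eta = u - piV u"
  define e where "e = piV u - uh"
  have etaM: "eta \<in> MV" unfolding eta_def using sMV uM piVuM by (simp add: subspace_diff)
  have eM: "e \<in> Vh" unfolding e_def using sVh piVu uhV by (simp add: subspace_diff)
  have eMV: "e \<in> MV" unfolding MV_def by (rule msum_right[OF sV eM])
  have ue: "u - uh = eta + e" unfolding eta_def e_def by simp
  have mzhM: "- zh \<in> MW" using sMW zhM by (simp add: subspace_neg)
  have g1: "ah eta zh + ah e zh = sa zh zh"
    using GO1 zhW bil_add1[OF bah' etaM eMV zhM] ue by simp
  have g2: "- ah e zh = sp eta e + sp e e"
    using GO2 eM bil_neg2[OF bah' eMV zhM] bil_add1[OF bsp etaM eMV eMV] ue by simp
  have key: "sp e e + sa zh zh = ah eta zh - sp eta e" using g1 g2 by argo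
  have etaeM: "eta + e \<in> MV" using sMV etaM eMV by (simp add: subspace_add)
  have etameM: "eta + - e \<in> MV" using sMV etaM eMV by (metis subspace_add subspace_neg)
  have meM: "- e \<in> MV" using sMV eMV by (simp add: subspace_neg)
  have exp1: "sp (eta + e) (eta + e) = sp eta eta + 2 * sp eta e + sp e e"
    using bil_add1[OF bsp etaM eMV etaeM] bil_add2[OF bsp etaM etaM eMV] bil_add2[OF bsp eMV etaM eMV]
      symsp[OF etaM eMV] by simp
  have exp2: "sp (eta + - e) (eta + - e) = sp eta eta - 2 * sp eta e + sp e e"
    using bil_add1[OF bsp etaM meM etameM] bil_add2[OF bsp etaM etaM meM] bil_add2[OF bsp meM etaM meM]
      bil_neg1[OF bsp eMV etaM] bil_neg1[OF bsp eMV meM] bil_neg2[OF bsp etaM eMV] bil_neg2[OF bsp eMV eMV]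
      symsp[OF etaM eMV] by simp
  have cs: "- sp eta e \<le> (sp eta eta + sp e e) / 2" using possp[OF etaeM] exp1 by argo
  have cs2: "sp (eta + e) (eta + e) \<le> 2 * sp eta eta + 2 * sp e e" using possp[OF etameM] exp1 exp2 by argo
  define A where "A = nplus eta"
  define B where "B = snorm sp eta"
  define M where "M = cag * h ^ k * semHk1 u"
  define x where "x = snorm sp e"
  define y where "y = snorm sa zh"
  define en where "en = eps * norm zh"
  have A0: "0 \<le> A" using np etaM unfolding A_def seminorm_on_def MV_def by blast
  have nL0: "0 \<le> nL eta" using nl etaM unfolding seminorm_on_def MV_def by blast
  have B0: "0 \<le> B" unfolding B_def snorm_def using possp[OF etaM] by simp
  have x0: "0 \<le> x" unfolding x_def snorm_def using possp[OF eMV] by simp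
  have y0: "0 \<le> y" unfolding y_def snorm_def using possa[OF zhM] by simp
  have en0: "0 \<le> en" unfolding en_def using eps by simp
  have uVH: "u \<in> V \<inter> Hk1" using uV uH by blast
  have AB0: "nL (u - piV u) + nplus (u - piV u) + snorm sp (u - piV u) \<le> cag * h ^ k * semHk1 u"
    using bspec[OF A1 uVH] .
  have AB: "A + B \<le> M" using AB0 nL0 unfolding A_def B_def M_def eta_def by linarith
  have sem0: "0 \<le> semHk1 u" using semi uH unfolding seminorm_on_def by blast
  have M0: "0 \<le> M" unfolding M_def using cag h0 sem0 by simp
  have B2: "B^2 = sp eta eta" unfolding B_def snorm_def using possp[OF etaM] by simp
  have x2: "x^2 = sp e e" unfolding x_def snorm_def using possp[OF eMV] by simp
  have y2: "y^2 = sa zh zh" unfolding y_def snorm_def using possa[OF zhM] by simp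
  have uVH2: "u \<in> V \<inter> H2" using uV uH H by blast
  have c1: "ah eta zh \<le> A * (ca * y + en)"
    using bspec[OF bspec[OF C1 uVH2] zhW] unfolding A_def eta_def y_def en_def .
  have "A * (ca * y + en) = A*ca*y + A*en" by (simp add: algebra_simps)
  hence ineq: "x^2 + y^2 \<le> A*ca*y + A*en + (B^2 + x^2)/2"
    using key c1 cs B2 x2 y2 by argo
  have part1: "x + y \<le> 2 * (M * sqrt (1 + ca^2) + en)"
    by (rule real1[OF x0 y0 A0 B0 _ en0 AB ineq]) (use ca in simp)
  have piW0: "piW 0 = 0"
  proof -
    have "piW (0 *\<^sub>R 0 + 0 *\<^sub>R 0) = 0 *\<^sub>R piW 0 + 0 *\<^sub>R piW 0"
      using linW sW unfolding linear_on_def by (meson subspace_0)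
    thus ?thesis by simp
  qed
  have snz: "snorm sa (piW 0 - zh) = y"
    unfolding piW0 y_def snorm_def using bil_neg1[OF bsa zhM mzhM] bil_neg2[OF bsa zhM zhM] by simp
  have nonneg: "0 \<le> M * sqrt (1 + ca^2) + en" using M0 en0 by simp
  have P1: "snorm sp (piV u - uh) + snorm sa (piW 0 - zh)
        \<le> 4 * (cag * sqrt (1 + ca\<^sup>2) * h ^ k * semHk1 u + eps * norm zh)"
  proof -
    have "M * sqrt (1 + ca^2) = cag * sqrt (1 + ca\<^sup>2) * h ^ k * semHk1 u" unfolding M_def by simp
    thus ?thesis using part1 nonneg snz unfolding x_def e_def en_def by argo
  qed
  have P2: "(\<forall>v\<in>V. \<forall>vh\<in>Vh. sp u (v + vh) = 0) \<longrightarrow>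
        snorm sp uh + snorm sa zh
          \<le> 4 * ((cag + cag * sqrt (1 + ca\<^sup>2)) * h ^ k * semHk1 u + eps * norm zh)"
  proof
    assume orth: "\<forall>v\<in>V. \<forall>vh\<in>Vh. sp u (v + vh) = 0"
    define w where "w = eta + e"
    have wM: "w \<in> MV" unfolding w_def by (rule etaeM)
    have mwM: "- w \<in> MV" using sMV wM by (simp add: subspace_neg)
    have uhw: "uh = u + - w" unfolding w_def eta_def e_def by simp
    have z1: "sp u uh = 0" using orth sV uhV by (metis add_0 subspace_0)
    have z2: "sp u (u + - uh) = 0" using orth uV uhV sVh by (metis subspace_neg)
    have uw: "u + - uh = w" unfolding w_def eta_def e_def by simp
    have "sp uh uh = sp u uh + sp (- w) uh"
      using bil_add1[OF bsp uM mwM uhM] uhw by simp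
    also have "\<dots> = - sp uh w" using z1 bil_neg1[OF bsp wM uhM] symsp[OF wM uhM] by simp
    also have "\<dots> = - (sp u w + sp (- w) w)" using bil_add1[OF bsp uM mwM wM] uhw by simp
    also have "\<dots> = sp w w" using z2 uw bil_neg1[OF bsp wM wM] by simp
    finally have uhu: "sp uh uh = sp w w" .
    have "snorm sp uh \<le> 2 * (B + x)"
    proof -
      have bx: "0 \<le> B * x" using B0 x0 by simp
      have sq: "(2 * (B + x))^2 = 4 * B^2 + 8 * (B * x) + 4 * x^2" by (simp add: power2_eq_square algebra_simps)
      have "sp uh uh \<le> (2 * (B + x))^2"
        using uhu cs2 B2 x2 bx sq zero_le_power2[of B] zero_le_power2[of x] unfolding w_def by linarith
      hence "sqrt (sp uh uh) \<le> sqrt ((2 * (B + x))^2)" by (rule real_sqrt_le_mono)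
      thus ?thesis unfolding snorm_def using B0 x0 by simp
    qed
    moreover have "M * sqrt (1 + ca^2) + M = (cag + cag * sqrt (1 + ca\<^sup>2)) * h ^ k * semHk1 u"
      unfolding M_def by (simp add: algebra_simps)
    ultimately show "snorm sp uh + snorm sa zh
          \<le> 4 * ((cag + cag * sqrt (1 + ca\<^sup>2)) * h ^ k * semHk1 u + eps * norm zh)"
      using part1 AB A0 nonneg M0 x0 y0 unfolding y_def en_def by argo
  qed
  show ?thesis using P1 P2 by blast
qed


theorem mainTheorem1:
  shows "\<exists>C>0. \<forall>(V::'f::real_inner set) W Vh Wh H2 Hk1 (semHk1::'f \<Rightarrow> real)
     (a::'f \<Rightarrow> 'f \<Rightarrow> real) ah sp sa (f::'f) u uh zh (piV::'f \<Rightarrow> 'f) piW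
     (nplus::'f \<Rightarrow> real) nL (ca::real) cag eps (h::real) (k::nat).
   ( subspace V \<and> subspace W \<and> subspace Vh \<and> subspace Wh
   \<and> subspace H2 \<and> subspace Hk1 \<and> Hk1 \<subseteq> H2 \<and> seminorm_on Hk1 semHk1
   \<and> 0 < h \<and> 1 \<le> k
   \<comment> \<open>forward problem: u \<in> V \<inter> H^{k+1}, a(u,w) = (f,w) for all w \<in> W\<close>
   \<and> bilinear_on V W a \<and> u \<in> V \<and> u \<in> Hk1 \<and> (\<forall>w\<in>W. a u w = inner f w)
   \<comment> \<open>discrete forms\<close>
   \<and> bilinear_on (msum V Vh) (msum W Wh) ah
   \<and> sym_psd_on (msum V Vh) sp \<and> sym_psd_on (msum W Wh) sa
   \<comment> \<open>discrete problem\<close>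
   \<and> uh \<in> Vh \<and> zh \<in> Wh
   \<and> (\<forall>vh\<in>Vh. \<forall>wh\<in>Wh. ah uh wh + sa zh wh = inner f wh
                       \<and> ah vh zh - sp uh vh = - sp u vh)
   \<comment> \<open>(GO), with z = 0\<close>
   \<and> (\<forall>wh\<in>Wh. ah (u - uh) wh = sa zh wh)
   \<and> (\<forall>vh\<in>Vh. ah vh (0 - zh) = sp (u - uh) vh)
   \<comment> \<open>operators and semi-norms\<close>
   \<and> piV ` V \<subseteq> Vh \<and> piW ` W \<subseteq> Wh \<and> linear_on V piV \<and> linear_on W piW
   \<and> seminorm_on (msum V Vh) nplus \<and> seminorm_on (msum V Vh) nL
   \<and> 0 < ca \<and> 0 < cag \<and> 0 \<le> eps
   \<comment> \<open>(C1)\<close>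
   \<and> (\<forall>v\<in>V \<inter> H2. \<forall>xh\<in>Wh.
        ah (v - piV v) xh \<le> nplus (v - piV v) * (ca * snorm sa xh + eps * norm xh))
   \<comment> \<open>(A1)\<close>
   \<and> (\<forall>v\<in>V \<inter> Hk1.
        nL (v - piV v) + nplus (v - piV v) + snorm sp (v - piV v) \<le> cag * h ^ k * semHk1 v) )
   \<longrightarrow>
   ( snorm sp (piV u - uh) + snorm sa (piW 0 - zh)
        \<le> C * (cag * sqrt (1 + ca\<^sup>2) * h ^ k * semHk1 u + eps * norm zh)
   \<and> ((\<forall>v\<in>V. \<forall>vh\<in>Vh. sp u (v + vh) = 0) \<longrightarrow>
        snorm sp uh + snorm sa zh
          \<le> C * ((cag + cag * sqrt (1 + ca\<^sup>2)) * h ^ k * semHk1 u + eps * norm zh)) )"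
    apply (rule exI[of _ 4])
  apply (rule conjI, simp)
  apply (intro allI impI)
  apply (elim conjE)
  subgoal premises p
    by (rule core[OF p(1,2,3,4,7,8,9,12,13,15,16,17,18,19,21,22,23,26,27,28,29,30,31,32,33)])
  done

end
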